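(* Let $p\geq 2$ be an integer, $n=2^p-1$ and $s=3\cdot 2^{p-2}$. Then there exists a perfect code $C$ in the hypercube $Q_n$ such that no element of $C$ contains $1^s$ as a substring.
   Context: The $n$-cube $Q_n$ is the graph whose vertex set is the set $\mathbb{B}_n$ of binary strings of length $n$, two strings being adjacent if they differ in exactly one position; its graph distance is the Hamming distance. A perfect code in a graph $G$ is a set $C$ of vertices such that every vertex of $G$ lies in the closed neighbourhood $N[c]=\{v: d_G(c,v)\le 1\}$ of exactly one vertex $c\in C$ (equivalently, $C$ is a dominating set and any two distinct elements of $C$ are at distance at least $3$). $1^s$ denotes the string of $s$ consecutive 1's; a string $\bm{f}$ is a substring of $\bm{s}$ if $\bm{s}=\bm{x}\bm{f}\bm{y}$ for some (possibly empty) strings $\bm{x},\bm{y}$. *)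

theory Defs
  imports Main "HOL-Library.Sublist"
begin

definition bstrings :: "nat \<Rightarrow> bool list set" where
  "bstrings n = {x. length x = n}"

text \<open>Hamming distance = graph distance of Q_n.\<close>
definition hamming :: "bool list \<Rightarrow> bool list \<Rightarrow> nat" where
  "hamming x y = card {i. i < length x \<and> x ! i \<noteq> y ! i}"

definition closed_nbhd :: "nat \<Rightarrow> bool list \<Rightarrow> bool list set" where
  "closed_nbhd n c = {v \<in> bstrings n. hamming c v \<le> 1}"

definition perfect_code :: "nat \<Rightarrow> bool list set \<Rightarrow> bool" where
  "perfect_code n C \<longleftrightarrow> C \<subseteq> bstrings n \<and>
     (\<forall>v \<in> bstrings n. \<exists>!c. c \<in> C \<and> v \<in> closed_nbhd n c)"

text \<open>The string 1^s (True encodes the bit 1).\<close>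
definition ones :: "nat \<Rightarrow> bool list" where
  "ones s = replicate s True"

end

theory Submission imports Defs begin
unbundle bit_operations_syntax

fun X :: "(nat \<Rightarrow> nat) \<Rightarrow> bool list \<Rightarrow> nat \<Rightarrow> nat" where
  "X f x 0 = 0"
| "X f x (Suc k) = (if x!k then f k XOR X f x k else X f x k)"

lemma xor_left_self_nat: "(a::nat) XOR (a XOR b) = b"
  by (simp add: xor.assoc[symmetric])

lemma X_cong: "(\<forall>i<k. x!i = y!i) \<Longrightarrow> X f x k = X f y k"
  by (induction k) auto

lemma X_flip: "i < k \<Longrightarrow> i < length x \<Longrightarrow> X f (x[i := \<not> x!i]) k = X f x k XOR f i"
proof (induction k)
  case 0 then show ?case by simp
next
  case (Suc k)
  show ?case
  proof (cases "i = k")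
    case True
    have c: "X f (x[i := \<not> x!i]) k = X f x k"
      by (rule X_cong) (use True in auto)
    show ?thesis using True Suc.prems c by (auto simp: xor.commute xor.left_commute xor_left_self_nat)
  next
    case False
    then have "i < k" using Suc.prems by simp
    then show ?thesis using Suc False by (auto simp: xor.commute xor.left_commute)
  qed
qed

lemma X_bit: "bit (X f x k) j \<longleftrightarrow> odd (card {i. i<k \<and> x!i \<and> bit (f i) j})"
proof (induction k)
  case 0 then show ?case by simp
next
  case (Suc k)
  have e: "{i. i<Suc k \<and> x!i \<and> bit (f i) j} =
     (if x!k \<and> bit (f k) j then insert k {i. i<k \<and> x!i \<and> bit (f i) j} else {i. i<k \<and> x!i \<and> bit (f i) j})"
    by (auto simp: less_Suc_eq)
  show ?case using Suc by (simp add: e bit_xor_iff)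
qed

lemma X_lt: "(\<forall>i<k. f i < 2^p) \<Longrightarrow> X f x k < (2::nat)^p"
proof (induction k)
  case 0 then show ?case by simp
next
  case (Suc k)
  then have a: "X f x k < 2^p" and b: "f k < 2^p" by auto
  have t1: "take_bit p (f k) = f k" "take_bit p (X f x k) = X f x k"
    using a b by (simp_all add: take_bit_nat_eq_self_iff)
  have "take_bit p (f k XOR X f x k) = f k XOR X f x k"
    by (simp only: take_bit_xor t1)
  then have "f k XOR X f x k < 2^p" by (simp only: take_bit_nat_eq_self_iff)
  then show ?case using a by simp
qed

lemma ham_self: "hamming v v = 0" by (simp add: hamming_def)

lemma ham_flip: "i < length v \<Longrightarrow> hamming (v[i := \<not> v!i]) v = 1"
proof -
  assume i: "i < length v"
  have "{j. j < length (v[i := \<not> v!i]) \<and> v[i := \<not> v!i] ! j \<noteq> v ! j} = {i}"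
    using i by (auto simp: nth_list_update)
  then show ?thesis by (simp add: hamming_def)
qed

lemma ham_le1: "length c = length v \<Longrightarrow> hamming c v \<le> 1 \<Longrightarrow> c = v \<or> (\<exists>i < length v. c = v[i := \<not> v!i])"
proof -
  assume l: "length c = length v" and h: "hamming c v \<le> 1"
  let ?D = "{i. i < length c \<and> c!i \<noteq> v!i}"
  have fin: "finite ?D" by simp
  show ?thesis
  proof (cases "card ?D = 0")
    case True
    then have "?D = {}" using fin by simp
    then have "c = v" using l by (auto intro: nth_equalityI)
    then show ?thesis by simp
  next
    case False
    have "card ?D \<le> 1" using h by (simp only: hamming_def)
    then have "card ?D = 1" using False by linarith
    then obtain i where D: "?D = {i}" by (auto simp: card_Suc_eq)
    then have il: "i < length v" "c!i \<noteq> v!i" using l by auto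
    have "c = v[i := \<not> v!i]"
    proof (rule nth_equalityI)
      show "length c = length (v[i := \<not> v ! i])" using l by simp
      fix j assume "j < length c"
      then show "c ! j = v[i := \<not> v ! i] ! j" using D il l
        by (cases "j = i") (auto simp: nth_list_update)
    qed
    then show ?thesis using il by blast
  qed
qed

lemma xor_lt: "(a::nat) < 2^p \<Longrightarrow> b < 2^p \<Longrightarrow> a XOR b < 2^p"
proof -
  assume a: "a < 2^p" and b: "b < 2^p"
  have t1: "take_bit p a = a" "take_bit p b = b"
    using a b by (simp_all add: take_bit_nat_eq_self_iff)
  have "take_bit p (a XOR b) = a XOR b"
    by (simp only: take_bit_xor t1)
  then show ?thesis by (simp only: take_bit_nat_eq_self_iff)
qed

lemma bit_top: "(a::nat) < 2^(Suc (Suc r)) \<Longrightarrow> bit a (Suc r) \<longleftrightarrow> 2^(Suc r) \<le> a"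
proof -
  assume a: "a < 2^(Suc (Suc r))"
  have "a div 2^(Suc r) < 2" using a by (simp add: less_mult_imp_div_less)
  then have "a div 2^(Suc r) = 0 \<or> a div 2^(Suc r) = 1" by linarith
  moreover have "2^(Suc r) \<le> a \<longleftrightarrow> a div 2^(Suc r) \<noteq> 0"
    using div_greater_zero_iff[of a "2^Suc r"] by simp
  ultimately show ?thesis by (auto simp: bit_iff_odd)
qed

definition lab :: "nat \<Rightarrow> nat \<Rightarrow> nat" where
  "lab k i = (if i + k \<le> 4*k - 1 then i + k else i + k + 1 - 4*k)"

lemma lab_range: "1 \<le> k \<Longrightarrow> i < 4*k-1 \<Longrightarrow> 1 \<le> lab k i \<and> lab k i \<le> 4*k-1"
  unfolding lab_def by auto

lemma lab_inj: "1 \<le> k \<Longrightarrow> i < 4*k-1 \<Longrightarrow> j < 4*k-1 \<Longrightarrow> lab k i = lab k j \<Longrightarrow> i = j"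
  unfolding lab_def by (auto split: if_splits)

lemma lab_surj: "1 \<le> k \<Longrightarrow> 1 \<le> t \<Longrightarrow> t \<le> 4*k-1 \<Longrightarrow> \<exists>i<4*k-1. lab k i = t"
proof -
  assume k: "1 \<le> k" and t: "1 \<le> t" "t \<le> 4*k-1"
  show ?thesis
  proof (cases "k \<le> t")
    case True
    then show ?thesis using k t by (intro exI[of _ "t - k"]) (auto simp: lab_def)
  next
    case False
    then show ?thesis using k t by (intro exI[of _ "t + 3*k - 1"]) (auto simp: lab_def)
  qed
qed

lemma lab_top: "1 \<le> k \<Longrightarrow> i < 4*k-1 \<Longrightarrow> 2*k \<le> lab k i \<longleftrightarrow> k \<le> i \<and> i < 3*k"
  unfolding lab_def by auto

lemma main:
  fixes r :: nat
  defines "k \<equiv> (2::nat)^r"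
  shows "\<exists>C. perfect_code (4*k-1) C \<and> (\<forall>c \<in> C. \<not> sublist (ones (3*k)) c)"
proof -
  define n where "n = 4*k-1"
  have k1: "1 \<le> k" unfolding k_def by simp
  have P: "(2::nat)^(Suc (Suc r)) = 4*k" "(2::nat)^(Suc r) = 2*k" unfolding k_def by simp_all
  have labP: "\<And>i. i < n \<Longrightarrow> lab k i < 2^(Suc (Suc r))"
    using lab_range[OF k1] P unfolding n_def by fastforce
  have XP: "\<And>x. X (lab k) x n < 2^(Suc (Suc r))"
    by (rule X_lt) (use labP in auto)
  define C where "C = {x \<in> bstrings n. X (lab k) x n = 2*k}"
  have pc: "perfect_code n C"
    unfolding perfect_code_def
  proof (intro conjI ballI)
    show "C \<subseteq> bstrings n" unfolding C_def by auto
    fix v assume v: "v \<in> bstrings n"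
    then have lv: "length v = n" by (simp add: bstrings_def)
    define \<sigma> where "\<sigma> = X (lab k) v n"
    have flipX: "\<And>i. i < n \<Longrightarrow> X (lab k) (v[i := \<not> v!i]) n = \<sigma> XOR lab k i"
      unfolding \<sigma>_def using lv by (simp add: X_flip)
    have flipB: "\<And>i. i < n \<Longrightarrow> v[i := \<not> v!i] \<in> bstrings n"
      using lv by (simp add: bstrings_def)
    have near: "\<And>c. c \<in> C \<Longrightarrow> v \<in> closed_nbhd n c \<Longrightarrow> c = v \<or> (\<exists>i<n. c = v[i := \<not> v!i])"
    proof -
      fix c assume "c \<in> C" "v \<in> closed_nbhd n c"
      then have "length c = length v" "hamming c v \<le> 1"
        using lv by (auto simp: C_def bstrings_def closed_nbhd_def)
      then show "c = v \<or> (\<exists>i<n. c = v[i := \<not> v!i])" using ham_le1 lv by blast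
    qed
    show "\<exists>!c. c \<in> C \<and> v \<in> closed_nbhd n c"
    proof (cases "\<sigma> = 2*k")
      case True
      show ?thesis
      proof (rule ex1I[of _ v])
        show "v \<in> C \<and> v \<in> closed_nbhd n v"
          using True v by (simp add: C_def \<sigma>_def closed_nbhd_def ham_self)
        fix c assume c: "c \<in> C \<and> v \<in> closed_nbhd n c"
        show "c = v"
        proof (rule ccontr)
          assume "c \<noteq> v"
          then obtain i where i: "i < n" "c = v[i := \<not> v!i]" using near c by blast
          then have "\<sigma> XOR lab k i = \<sigma>" using flipX c True by (simp add: C_def)
          then have "lab k i = \<sigma> XOR \<sigma>" by (metis xor_left_self_nat)
          then have "lab k i = 0" by simp
          then show False using lab_range[OF k1, of i] i unfolding n_def by simp
        qed
      qed
    next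
      case False
      define t where "t = \<sigma> XOR 2*k"
      have "t < 2^(Suc (Suc r))" unfolding t_def \<sigma>_def
        by (rule xor_lt) (use XP P in auto)
      then have t1: "t \<le> n" unfolding n_def using P by simp
      have "t \<noteq> 0"
      proof
        assume "t = 0"
        then have "\<sigma> XOR t = 2*k" unfolding t_def using xor_left_self_nat by metis
        then show False using \<open>t = 0\<close> False by simp
      qed
      then obtain i where i: "i < n" "lab k i = t"
        using lab_surj[OF k1, of t] t1 unfolding n_def by auto
      show ?thesis
      proof (rule ex1I[of _ "v[i := \<not> v!i]"])
        have "\<sigma> XOR t = 2*k" unfolding t_def using xor_left_self_nat by metis
        then show "v[i := \<not> v!i] \<in> C \<and> v \<in> closed_nbhd n (v[i := \<not> v!i])"
          using i flipX[of i] flipB[of i] v lv ham_flip[of i v]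
          by (simp add: C_def closed_nbhd_def)
        fix c assume c: "c \<in> C \<and> v \<in> closed_nbhd n c"
        have "c \<noteq> v" using c False by (auto simp: C_def \<sigma>_def)
        then obtain j where j: "j < n" "c = v[j := \<not> v!j]" using near c by blast
        then have "\<sigma> XOR lab k j = 2*k" using flipX c by (simp add: C_def)
        then have "lab k j = t" unfolding t_def by (metis xor_left_self_nat)
        then have "j = i" using lab_inj[OF k1, of j i] i j unfolding n_def by simp
        then show "c = v[i := \<not> v!i]" using j by simp
      qed
    qed
  qed
  have ns: "\<forall>c \<in> C. \<not> sublist (ones (3*k)) c"
  proof (intro ballI notI)
    fix c assume c: "c \<in> C" and sl: "sublist (ones (3*k)) c"
    then obtain xs ys where cs: "c = xs @ replicate (3*k) True @ ys"
      by (auto simp: sublist_def ones_def)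
    have lc: "length c = n" and Xc: "X (lab k) c n = 2*k" using c by (auto simp: C_def bstrings_def)
    then have lxs: "length xs + 3*k \<le> n" using cs by simp
    have ones: "\<And>i. length xs \<le> i \<Longrightarrow> i < length xs + 3*k \<Longrightarrow> c!i"
      using cs by (auto simp: nth_append)
    have S: "{i. i < n \<and> c!i \<and> bit (lab k i) (Suc r)} = {k..<3*k}"
    proof -
      have "\<And>i. i < n \<Longrightarrow> bit (lab k i) (Suc r) \<longleftrightarrow> k \<le> i \<and> i < 3*k"
        using bit_top labP lab_top[OF k1] P unfolding n_def by auto
      then show ?thesis using ones lxs unfolding n_def by auto
    qed
    have "\<not> bit (X (lab k) c n) (Suc r)"
      by (simp add: X_bit S)
    moreover have "bit (2*k) (Suc r)" unfolding k_def by (simp add: bit_double_iff bit_exp_iff)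
    ultimately show False using Xc by simp
  qed
  show ?thesis using pc ns unfolding n_def by blast
qed

theorem theorem2:
  fixes p :: nat
  assumes "p \<ge> 2"
  shows "\<exists>C. perfect_code (2^p - 1) C \<and>
           (\<forall>c \<in> C. \<not> sublist (ones (3 * 2^(p-2))) c)"
proof -
  obtain r where p: "p = Suc (Suc r)" using assms by (metis add_2_eq_Suc le_Suc_ex)
  have "(2::nat)^p - 1 = 4 * 2^r - 1" "p - 2 = r" using p by simp_all
  then show ?thesis using main[of r] by simp
qed

end
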